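(* Let $\mathcal{F}$ satisfy the standard conditions, let $A$ be an $\mathcal{F}$-sequence and $\alpha\in\mathbb{R}$. If $x\,|A(x)-\alpha|$ is bounded as $x$ ranges over $\mathbb{N}$, then $\alpha$ is $\mathcal{F}$-computable.
   Context: $\mathbb{N}=\{0,1,2,\dots\}$. $\mathcal{F}$ is a set of functions $\mathbb{N}^n\to\mathbb{N}$; it satisfies the standard conditions if it contains the zero function, the successor, all projections $P^n_i$, addition, multiplication and modified subtraction $x\dot- y=\max(x-y,0)$, and is closed under composition. An $\mathcal{F}$-sequence is $A:\mathbb{N}\to\mathbb{Q}$, $A(x)=\frac{f(x)-g(x)}{h(x)+1}$, with $f,g,h:\mathbb{N}\to\mathbb{N}$ in $\mathcal{F}$. A real number $\alpha$ is $\mathcal{F}$-computable if there is an $\mathcal{F}$-sequence $A$ with $|A(x)-\alpha|\le\frac1{x+1}$ for all $x\in\mathbb{N}$. *)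

theory Defs
  imports "HOL-Analysis.Analysis"
begin

text \<open>A class of functions F is modelled as a family indexed by the arity n:
  F n is a set of functions nat list \<Rightarrow> nat, of which only the values on
  lists of length n matter (an n-ary function N^n \<rightarrow> N).\<close>

type_synonym fclass = "nat \<Rightarrow> (nat list \<Rightarrow> nat) set"

definition inF :: "fclass \<Rightarrow> nat \<Rightarrow> (nat list \<Rightarrow> nat) \<Rightarrow> bool" where
  "inF F n f \<longleftrightarrow> (\<exists>g\<in>F n. \<forall>xs. length xs = n \<longrightarrow> g xs = f xs)"

definition standard_conditions :: "fclass \<Rightarrow> bool" where
  "standard_conditions F \<longleftrightarrow>
     inF F 1 (\<lambda>xs. 0) \<and>
     inF F 1 (\<lambda>xs. Suc (xs ! 0)) \<and>
     (\<forall>n i. 1 \<le> i \<and> i \<le> n \<longrightarrow> inF F n (\<lambda>xs. xs ! (i - 1))) \<and>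
     inF F 2 (\<lambda>xs. xs ! 0 + xs ! 1) \<and>
     inF F 2 (\<lambda>xs. xs ! 0 * xs ! 1) \<and>
     inF F 2 (\<lambda>xs. xs ! 0 - xs ! 1) \<and>
     (\<forall>m n f gs. inF F m f \<and> length gs = m \<and> (\<forall>g\<in>set gs. inF F n g) \<longrightarrow>
        inF F n (\<lambda>xs. f (map (\<lambda>g. g xs) gs)))"

definition unaryF :: "fclass \<Rightarrow> (nat \<Rightarrow> nat) \<Rightarrow> bool" where
  "unaryF F f \<longleftrightarrow> inF F 1 (\<lambda>xs. f (xs ! 0))"

definition F_sequence :: "fclass \<Rightarrow> (nat \<Rightarrow> rat) \<Rightarrow> bool" where
  "F_sequence F A \<longleftrightarrow> (\<exists>f g h. unaryF F f \<and> unaryF F g \<and> unaryF F h \<and>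
     (\<forall>x. A x = (of_nat (f x) - of_nat (g x)) / (of_nat (h x) + 1)))"

definition F_computable :: "fclass \<Rightarrow> real \<Rightarrow> bool" where
  "F_computable F \<alpha> \<longleftrightarrow> (\<exists>A. F_sequence F A \<and>
     (\<forall>x. \<bar>real_of_rat (A x) - \<alpha>\<bar> \<le> 1 / (real x + 1)))"

end

theory Submission
  imports Defs
begin

lemma comp1:
  assumes "standard_conditions F" "inF F 1 f" "inF F n p"
  shows "inF F n (\<lambda>xs. f [p xs])"
proof -
  have "inF F n (\<lambda>xs. f (map (\<lambda>g. g xs) [p]))"
  proof -
    have c: "\<forall>m n f gs. inF F m f \<and> length gs = m \<and> (\<forall>g\<in>set gs. inF F n g) \<longrightarrow>
        inF F n (\<lambda>xs. f (map (\<lambda>g. g xs) gs))" using assms(1) unfolding standard_conditions_def by blast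
    show ?thesis using c[rule_format, of 1 f "[p]" n] assms(2,3) by simp
  qed
  then show ?thesis by simp
qed

lemma comp2:
  assumes "standard_conditions F" "inF F 2 f" "inF F n p" "inF F n q"
  shows "inF F n (\<lambda>xs. f [p xs, q xs])"
proof -
  have "inF F n (\<lambda>xs. f (map (\<lambda>g. g xs) [p, q]))"
  proof -
    have c: "\<forall>m n f gs. inF F m f \<and> length gs = m \<and> (\<forall>g\<in>set gs. inF F n g) \<longrightarrow>
        inF F n (\<lambda>xs. f (map (\<lambda>g. g xs) gs))" using assms(1) unfolding standard_conditions_def by blast
    show ?thesis using c[rule_format, of 2 f "[p,q]" n] assms(2,3,4) by simp
  qed
  then show ?thesis by simp
qed

lemma const1:
  assumes "standard_conditions F"
  shows "inF F 1 (\<lambda>xs. k)"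
proof (induction k)
  case 0
  then show ?case using assms unfolding standard_conditions_def by simp
next
  case (Suc k)
  have "inF F 1 (\<lambda>xs. Suc ([k] ! 0))"
    using comp1[OF assms _ Suc] assms unfolding standard_conditions_def by blast
  then show ?case by simp
qed

lemma id1:
  assumes "standard_conditions F"
  shows "inF F 1 (\<lambda>xs. xs ! 0)"
  using assms unfolding standard_conditions_def
  by (metis diff_self_eq_0 le_refl)

lemma lin1:
  assumes "standard_conditions F"
  shows "inF F 1 (\<lambda>xs. K * Suc (xs ! 0))"
proof -
  have s: "inF F 1 (\<lambda>xs. Suc ([xs ! 0] ! 0))"
    using comp1[OF assms _ id1[OF assms]] assms unfolding standard_conditions_def by blast
  have m: "inF F 2 (\<lambda>ys. ys ! 0 * ys ! 1)" using assms unfolding standard_conditions_def by blast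
  have s': "inF F 1 (\<lambda>xs. Suc (xs ! 0))" using s by simp
  have "inF F 1 (\<lambda>xs. (\<lambda>ys. ys ! 0 * ys ! 1) [K, Suc (xs ! 0)])"
    by (rule comp2[OF assms m const1[OF assms] s'])
  then show ?thesis by simp
qed

lemma unary_comp:
  assumes "standard_conditions F" "unaryF F f"
  shows "unaryF F (\<lambda>x. f (K * Suc x))"
proof -
  have "inF F 1 (\<lambda>xs. (\<lambda>ys. f (ys ! 0)) [K * Suc (xs ! 0)])"
    using comp1[OF assms(1) _ lin1[OF assms(1)]] assms(2) unfolding unaryF_def by blast
  then show ?thesis unfolding unaryF_def by simp
qed

theorem mainTheorem11:
  fixes F :: fclass and A :: "nat \<Rightarrow> rat" and \<alpha> :: real
  assumes "standard_conditions F"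
    and "F_sequence F A"
    and "\<exists>M. \<forall>x. real x * \<bar>real_of_rat (A x) - \<alpha>\<bar> \<le> M"
  shows "F_computable F \<alpha>"
proof -
  obtain M where M: "\<And>x. real x * \<bar>real_of_rat (A x) - \<alpha>\<bar> \<le> M" using assms(3) by blast
  obtain f g h where fgh: "unaryF F f" "unaryF F g" "unaryF F h"
    "\<And>x. A x = (of_nat (f x) - of_nat (g x)) / (of_nat (h x) + 1)"
    using assms(2) unfolding F_sequence_def by blast
  define K where "K = Suc (nat \<lceil>M\<rceil>)"
  have KM: "M \<le> real K" unfolding K_def by linarith
  define B where "B = (\<lambda>x. A (K * Suc x))"
  have "F_sequence F B"
    unfolding F_sequence_def B_def
    using unary_comp[OF assms(1) fgh(1)] unary_comp[OF assms(1) fgh(2)] unary_comp[OF assms(1) fgh(3)] fgh(4)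
    by blast
  moreover have "\<bar>real_of_rat (B x) - \<alpha>\<bar> \<le> 1 / (real x + 1)" for x
  proof -
    let ?n = "K * Suc x"
    have pos: "real ?n > 0" unfolding K_def by (simp only: of_nat_0_less_iff) simp
    have "real ?n * \<bar>real_of_rat (B x) - \<alpha>\<bar> \<le> real K" using M[of ?n] KM unfolding B_def by linarith
    hence "real K * (real x + 1) * \<bar>real_of_rat (B x) - \<alpha>\<bar> \<le> real K * 1" by (simp add: algebra_simps)
    moreover have "real K > 0" unfolding K_def by simp
    ultimately have "(real x + 1) * \<bar>real_of_rat (B x) - \<alpha>\<bar> \<le> 1"
      by (simp add: mult.assoc)
    thus ?thesis by (simp add: field_simps)
  qed
  ultimately show ?thesis unfolding F_computable_def by blast
qed

end
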